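(* Let $\Gamma$ be a splice diagram satisfying the edge determinant condition. Then $d_u\,d_v\geq \ell_{u,v}^2$ for all nodes $u,v$ of $\Gamma$, with equality if and only if $u=v$.
   Context: A splice diagram is a finite tree $\Gamma$ with at least one vertex of valency $\geq3$ and no vertex of valency $2$; vertices of valency $1$ are leaves, the others nodes. For each node $v$ and edge $e$ adjacent to $v$ a positive integer weight $d_{v,e}$ is given; $d_{v,u}:=d_{v,e}$ for $e$ the edge at $v$ on the geodesic $[v,u]$. The total weight of a node is $d_v=\prod_{e\ni v}d_{v,e}$. For distinct vertices $u,v$, $\ell_{u,v}$ is the product of all weights $d_{w,e}$ with $w$ a node on $[u,v]$ and $e$ an edge at $w$ not contained in $[u,v]$; $\ell_{v,v}:=d_v$. Edge determinant condition: $d_{u,v}d_{v,u}>\ell_{u,v}$ for each edge $[u,v]$ between two nodes. *)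

theory Defs
  imports Main
begin

definition is_path :: "('v \<Rightarrow> 'v \<Rightarrow> bool) \<Rightarrow> 'v \<Rightarrow> 'v \<Rightarrow> 'v list \<Rightarrow> bool" where
  "is_path E u v p \<longleftrightarrow> p \<noteq> [] \<and> hd p = u \<and> last p = v \<and> distinct p \<and>
     (\<forall>i. Suc i < length p \<longrightarrow> E (p ! i) (p ! Suc i))"

definition is_tree :: "'v set \<Rightarrow> ('v \<Rightarrow> 'v \<Rightarrow> bool) \<Rightarrow> bool" where
  "is_tree V E \<longleftrightarrow> finite V \<and>
     (\<forall>x y. E x y \<longrightarrow> x \<in> V \<and> y \<in> V \<and> E y x \<and> x \<noteq> y) \<and>
     (\<forall>u\<in>V. \<forall>v\<in>V. \<exists>!p. is_path E u v p)"

definition nbrs :: "('v \<Rightarrow> 'v \<Rightarrow> bool) \<Rightarrow> 'v \<Rightarrow> 'v set" where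
  "nbrs E v = {x. E v x}"

definition valency :: "('v \<Rightarrow> 'v \<Rightarrow> bool) \<Rightarrow> 'v \<Rightarrow> nat" where
  "valency E v = card (nbrs E v)"

definition is_node :: "'v set \<Rightarrow> ('v \<Rightarrow> 'v \<Rightarrow> bool) \<Rightarrow> 'v \<Rightarrow> bool" where
  "is_node V E v \<longleftrightarrow> v \<in> V \<and> valency E v \<noteq> 1"

definition geod :: "('v \<Rightarrow> 'v \<Rightarrow> bool) \<Rightarrow> 'v \<Rightarrow> 'v \<Rightarrow> 'v list" where
  "geod E u v = (THE p. is_path E u v p)"

definition path_edges :: "'v list \<Rightarrow> ('v \<times> 'v) set" where
  "path_edges p = {(p ! i, p ! Suc i) | i. Suc i < length p}"

text \<open>Weights: d v x is the weight d_{v,e} of the edge e = [v,x] at node v.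
  The weight of v towards u (u \<noteq> v): d_{v,u}.\<close>
definition dw :: "('v \<Rightarrow> 'v \<Rightarrow> bool) \<Rightarrow> ('v \<Rightarrow> 'v \<Rightarrow> nat) \<Rightarrow> 'v \<Rightarrow> 'v \<Rightarrow> nat" where
  "dw E d v u = d v (geod E v u ! 1)"

definition dtot :: "('v \<Rightarrow> 'v \<Rightarrow> bool) \<Rightarrow> ('v \<Rightarrow> 'v \<Rightarrow> nat) \<Rightarrow> 'v \<Rightarrow> nat" where
  "dtot E d v = (\<Prod>x\<in>nbrs E v. d v x)"

definition ell :: "'v set \<Rightarrow> ('v \<Rightarrow> 'v \<Rightarrow> bool) \<Rightarrow> ('v \<Rightarrow> 'v \<Rightarrow> nat) \<Rightarrow> 'v \<Rightarrow> 'v \<Rightarrow> nat" where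
  "ell V E d u v =
    (if u = v then dtot E d v
     else (\<Prod>w\<in>{w \<in> set (geod E u v). is_node V E w}.
             \<Prod>x\<in>{x. E w x \<and> (w, x) \<notin> path_edges (geod E u v) \<and> (x, w) \<notin> path_edges (geod E u v)}.
               d w x))"

definition splice_diagram :: "'v set \<Rightarrow> ('v \<Rightarrow> 'v \<Rightarrow> bool) \<Rightarrow> ('v \<Rightarrow> 'v \<Rightarrow> nat) \<Rightarrow> bool" where
  "splice_diagram V E d \<longleftrightarrow> is_tree V E \<and>
     (\<exists>v\<in>V. valency E v \<ge> 3) \<and>
     (\<forall>v\<in>V. valency E v \<noteq> 2) \<and>
     (\<forall>v x. is_node V E v \<longrightarrow> E v x \<longrightarrow> d v x > 0)"

definition edge_determinant_condition ::
  "'v set \<Rightarrow> ('v \<Rightarrow> 'v \<Rightarrow> bool) \<Rightarrow> ('v \<Rightarrow> 'v \<Rightarrow> nat) \<Rightarrow> bool" where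
  "edge_determinant_condition V E d \<longleftrightarrow>
     (\<forall>u v. is_node V E u \<longrightarrow> is_node V E v \<longrightarrow> E u v \<longrightarrow>
        dw E d u v * dw E d v u > ell V E d u v)"

end

theory Submission
  imports Defs
begin

definition offn :: "('v \<Rightarrow> 'v \<Rightarrow> bool) \<Rightarrow> 'v list \<Rightarrow> 'v \<Rightarrow> 'v set" where
  "offn E p w = {x. E w x \<and> (w, x) \<notin> path_edges p \<and> (x, w) \<notin> path_edges p}"

lemma pe1:
  assumes "distinct p" "i < length p"
  shows "(p!i, x) \<in> path_edges p \<longleftrightarrow> (Suc i < length p \<and> x = p!Suc i)"
  using assms unfolding path_edges_def
  by (auto simp: nth_eq_iff_index_eq)

lemma pe2:
  assumes "distinct p" "i < length p"
  shows "(x, p!i) \<in> path_edges p \<longleftrightarrow> (0 < i \<and> x = p!(i-1))"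
proof
  assume "(x, p!i) \<in> path_edges p"
  then obtain j where j: "x = p!j" "p!i = p!Suc j" "Suc j < length p" unfolding path_edges_def by auto
  then have "i = Suc j" using assms by (simp add: nth_eq_iff_index_eq)
  then show "0 < i \<and> x = p!(i-1)" using j by simp
next
  assume "0 < i \<and> x = p!(i-1)"
  then show "(x, p!i) \<in> path_edges p" using assms unfolding path_edges_def
    by (auto intro!: exI[of _ "i-1"])
qed

lemma dtot_split:
  assumes fin: "finite (nbrs E (p!i))" and dist: "distinct p" and i: "i < length p"
    and adj: "\<forall>j. Suc j < length p \<longrightarrow> E (p!j) (p!Suc j)"
    and sym: "\<forall>x y. E x y \<longrightarrow> E y x"
  shows "dtot E d (p!i) = (\<Prod>x\<in>offn E p (p!i). d (p!i) x)
     * (if Suc i < length p then d (p!i) (p!Suc i) else 1)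
     * (if 0 < i then d (p!i) (p!(i-1)) else 1)"
proof -
  define R1 where "R1 = (if Suc i < length p then {p!Suc i} else {})"
  define R2 where "R2 = (if 0 < i then {p!(i-1)} else {})"
  have E1: "Suc i < length p \<Longrightarrow> E (p!i) (p!Suc i)" using adj by auto
  have E2: "E (p!i) (p!(i-1))" if pos: "0 < i"
  proof -
    obtain j where j: "i = Suc j" using pos by (cases i) auto
    have "E (p!j) (p!Suc j)" using adj i j by auto
    then show ?thesis using sym j by simp
  qed
  have ne: "Suc i < length p \<Longrightarrow> 0 < i \<Longrightarrow> p!Suc i \<noteq> p!(i-1)"
    using dist i by (simp add: nth_eq_iff_index_eq)
  have un: "nbrs E (p!i) = offn E p (p!i) \<union> (R1 \<union> R2)"
    using E1 E2 unfolding nbrs_def offn_def R1_def R2_def pe1[OF dist i] pe2[OF dist i]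
    by auto
  have dj: "offn E p (p!i) \<inter> (R1 \<union> R2) = {}"
    unfolding offn_def R1_def R2_def pe1[OF dist i] pe2[OF dist i] by auto
  have f2: "finite (offn E p (p!i))" "finite (R1 \<union> R2)" using fin un by auto
  have "dtot E d (p!i) = (\<Prod>x\<in>offn E p (p!i). d (p!i) x) * (\<Prod>x\<in>R1 \<union> R2. d (p!i) x)"
    unfolding dtot_def un by (rule prod.union_disjoint[OF f2 dj])
  moreover have "(\<Prod>x\<in>R1 \<union> R2. d (p!i) x) = (if Suc i < length p then d (p!i) (p!Suc i) else 1)
     * (if 0 < i then d (p!i) (p!(i-1)) else 1)"
    unfolding R1_def R2_def using ne by auto
  ultimately show ?thesis by simp
qed

lemma prod_if_last:
  "(\<Prod>i<Suc m. if Suc i < Suc m then f i else (1::nat)) = (\<Prod>i<m. f i)"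
  by (simp add: prod.lessThan_Suc)

lemma prod_if_first:
  "(\<Prod>i<Suc m. if 0 < i then h i else (1::nat)) = (\<Prod>j<m. h (Suc j))"
  by (simp only: prod.lessThan_Suc_shift) simp

lemma prod_path:
  assumes fin: "\<forall>w. finite (nbrs E w)" and dist: "distinct p" and n: "length p = Suc m"
    and adj: "\<forall>j. Suc j < length p \<longrightarrow> E (p!j) (p!Suc j)"
    and sym: "\<forall>x y. E x y \<longrightarrow> E y x"
  shows "(\<Prod>i<Suc m. dtot E d (p!i)) = (\<Prod>i<Suc m. \<Prod>x\<in>offn E p (p!i). d (p!i) x)
     * (\<Prod>i<m. d (p!i) (p!Suc i) * d (p!Suc i) (p!i))"
proof -
  have "(\<Prod>i<Suc m. dtot E d (p!i)) = (\<Prod>i<Suc m. (\<Prod>x\<in>offn E p (p!i). d (p!i) x)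
     * (if Suc i < Suc m then d (p!i) (p!Suc i) else 1)
     * (if 0 < i then d (p!i) (p!(i-1)) else 1))"
    using dtot_split[OF fin[rule_format] dist _ adj sym] n by (intro prod.cong) auto
  also have "\<dots> = (\<Prod>i<Suc m. \<Prod>x\<in>offn E p (p!i). d (p!i) x)
     * (\<Prod>i<Suc m. if Suc i < Suc m then d (p!i) (p!Suc i) else 1)
     * (\<Prod>i<Suc m. if 0 < i then d (p!i) (p!(i-1)) else 1)"
    by (simp add: prod.distrib)
  also have "\<dots> = (\<Prod>i<Suc m. \<Prod>x\<in>offn E p (p!i). d (p!i) x)
     * (\<Prod>i<m. d (p!i) (p!Suc i)) * (\<Prod>i<m. d (p!Suc i) (p!i))"
    by (simp only: prod_if_last prod_if_first) simp
  finally show ?thesis by (simp add: prod.distrib)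
qed

lemma tree_facts:
  assumes "splice_diagram V E d"
  shows "finite V" "\<And>x y. E x y \<Longrightarrow> x \<in> V \<and> y \<in> V \<and> E y x \<and> x \<noteq> y"
    "\<And>u v. u \<in> V \<Longrightarrow> v \<in> V \<Longrightarrow> \<exists>!p. is_path E u v p"
    "\<And>v x. is_node V E v \<Longrightarrow> E v x \<Longrightarrow> d v x > 0"
  using assms unfolding splice_diagram_def is_tree_def by blast+

lemma fin_nbrs:
  assumes "splice_diagram V E d" shows "finite (nbrs E w)"
proof -
  have "nbrs E w \<subseteq> V" using tree_facts(2)[OF assms] unfolding nbrs_def by blast
  then show ?thesis using tree_facts(1)[OF assms] finite_subset by blast
qed

lemma geod_path:
  assumes "splice_diagram V E d" "u \<in> V" "v \<in> V"
  shows "is_path E u v (geod E u v)"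
  unfolding geod_def using tree_facts(3)[OF assms(1) assms(2,3)] by (rule theI')

lemma geod_adj:
  assumes "splice_diagram V E d" "E x y"
  shows "geod E x y = [x, y]"
proof -
  have xy: "x \<in> V" "y \<in> V" "x \<noteq> y" using tree_facts(2)[OF assms(1) assms(2)] by auto
  have "is_path E x y [x, y]" unfolding is_path_def using xy assms(2)
    by (auto simp: less_Suc_eq)
  then show ?thesis unfolding geod_def
    using tree_facts(3)[OF assms(1) xy(1,2)] by (rule the1_equality[rotated])
qed

lemma dtot_pos:
  assumes "splice_diagram V E d" "is_node V E w"
  shows "dtot E d w > 0"
  unfolding dtot_def using tree_facts(4)[OF assms(1,2)] fin_nbrs[OF assms(1)]
  by (intro prod_pos) (auto simp: nbrs_def)

lemma path_nodes:
  assumes sd: "splice_diagram V E d" and p: "is_path E u v p"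
    and u: "is_node V E u" and v: "is_node V E v" and i: "i < length p"
  shows "is_node V E (p!i)"
proof -
  have ne: "p \<noteq> []" and dist: "distinct p" and adj: "\<forall>j. Suc j < length p \<longrightarrow> E (p!j) (p!Suc j)"
    and h: "hd p = u" and l: "last p = v" using p unfolding is_path_def by auto
  consider "i = 0" | "i = length p - 1" | "0 < i" "Suc i < length p" using i by linarith
  then show ?thesis
  proof cases
    case 1 then show ?thesis using h ne u by (simp add: hd_conv_nth)
  next
    case 2 then show ?thesis using l ne v by (simp add: last_conv_nth)
  next
    case 3
    have e1: "E (p!i) (p!Suc i)" using adj 3 by auto
    obtain j where j: "i = Suc j" using 3 by (cases i) auto
    have "E (p!j) (p!Suc j)" using adj 3 j by auto
    then have "E (p!Suc j) (p!j)" using tree_facts(2)[OF sd] by blast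
    then have e2: "E (p!i) (p!(i-1))" using j by simp
    have inV: "p!i \<in> V" using tree_facts(2)[OF sd e1] by auto
    have neq: "p!Suc i \<noteq> p!(i-1)" using dist 3 by (simp add: nth_eq_iff_index_eq)
    have "{p!Suc i, p!(i-1)} \<subseteq> nbrs E (p!i)" using e1 e2 unfolding nbrs_def by auto
    then have "card {p!Suc i, p!(i-1)} \<le> valency E (p!i)" unfolding valency_def
      using fin_nbrs[OF sd] by (intro card_mono) auto
    then have "valency E (p!i) \<ge> 2" using neq by simp
    then show ?thesis using inV unfolding is_node_def by simp
  qed
qed

lemma ell_path:
  assumes sd: "splice_diagram V E d" and u: "is_node V E u" and v: "is_node V E v" and uv: "u \<noteq> v"
  shows "ell V E d u v = (\<Prod>i<length (geod E u v). \<Prod>x\<in>offn E (geod E u v) (geod E u v ! i). d (geod E u v ! i) x)"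
proof -
  define p where "p = geod E u v"
  have p: "is_path E u v p" unfolding p_def using geod_path[OF sd] u v unfolding is_node_def by auto
  have dist: "distinct p" using p unfolding is_path_def by auto
  have S: "{w \<in> set p. is_node V E w} = nth p ` {..<length p}"
    using path_nodes[OF sd p u v] by (auto simp: in_set_conv_nth)
  have "ell V E d u v = (\<Prod>w\<in>nth p ` {..<length p}. \<Prod>x\<in>offn E p w. d w x)"
    unfolding ell_def offn_def using uv S by (simp add: p_def)
  also have "\<dots> = (\<Prod>i<length p. \<Prod>x\<in>offn E p (p!i). d (p!i) x)"
    by (subst prod.reindex) (auto intro: inj_on_nth[OF dist])
  finally show ?thesis unfolding p_def .
qed

lemma key:
  assumes sd: "splice_diagram V E d" and u: "is_node V E u" and v: "is_node V E v" and uv: "u \<noteq> v"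
    and len: "length (geod E u v) = Suc m"
  shows "ell V E d u v * (\<Prod>i<m. d (geod E u v!i) (geod E u v!Suc i) * d (geod E u v!Suc i) (geod E u v!i))
     = (\<Prod>i<Suc m. dtot E d (geod E u v!i))"
proof -
  define p where "p = geod E u v"
  have p: "is_path E u v p" unfolding p_def using geod_path[OF sd] u v unfolding is_node_def by auto
  have dist: "distinct p" and adj: "\<forall>j. Suc j < length p \<longrightarrow> E (p!j) (p!Suc j)"
    using p unfolding is_path_def by auto
  have sym: "\<forall>x y. E x y \<longrightarrow> E y x" using tree_facts(2)[OF sd] by blast
  have e: "ell V E d u v = (\<Prod>i<Suc m. \<Prod>x\<in>offn E p (p!i). d (p!i) x)"
    using ell_path[OF sd u v uv] len unfolding p_def[symmetric] by simp
  show ?thesis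
    unfolding p_def[symmetric] e
    using prod_path[OF allI[OF fin_nbrs[OF sd]] dist len[folded p_def] adj sym, of d]
    by simp
qed

lemma adj_ineq:
  assumes sd: "splice_diagram V E d" and edc: "edge_determinant_condition V E d"
    and x: "is_node V E x" and y: "is_node V E y" and e: "E x y"
  shows "dtot E d x * dtot E d y < (d x y * d y x)^2"
proof -
  have g: "geod E x y = [x, y]" "geod E y x = [y, x]" using geod_adj[OF sd] e tree_facts(2)[OF sd e] by auto
  have xy: "x \<noteq> y" using tree_facts(2)[OF sd e] by auto
  have k: "ell V E d x y * (d x y * d y x) = dtot E d x * dtot E d y"
    using key[OF sd x y xy, of 1] g by simp
  have "dw E d x y * dw E d y x > ell V E d x y" using edc x y e unfolding edge_determinant_condition_def by blast
  then have lt: "ell V E d x y < d x y * d y x" unfolding dw_def g by simp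
  have pos: "0 < d x y * d y x" using lt by linarith
  have "ell V E d x y * (d x y * d y x) < (d x y * d y x) * (d x y * d y x)"
    using lt pos by (rule mult_strict_right_mono)
  then show ?thesis using k by (simp add: power2_eq_square)
qed

theorem lemma2p9:
  fixes V :: "'v set" and E :: "'v \<Rightarrow> 'v \<Rightarrow> bool" and d :: "'v \<Rightarrow> 'v \<Rightarrow> nat"
  assumes "splice_diagram V E d"
    and "edge_determinant_condition V E d"
    and "is_node V E u" and "is_node V E v"
  shows "dtot E d u * dtot E d v \<ge> (ell V E d u v)\<^sup>2 \<and>
         (dtot E d u * dtot E d v = (ell V E d u v)\<^sup>2 \<longleftrightarrow> u = v)"
proof (cases "u = v")
  case True
  then show ?thesis unfolding ell_def by (simp add: power2_eq_square)
next
  case False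
  note sd = assms(1) and edc = assms(2) and u = assms(3) and v = assms(4)
  define p where "p = geod E u v"
  have p: "is_path E u v p" unfolding p_def using geod_path[OF sd] u v unfolding is_node_def by auto
  have ne: "p \<noteq> []" and dist: "distinct p" and adj: "\<forall>j. Suc j < length p \<longrightarrow> E (p!j) (p!Suc j)"
    and h: "hd p = u" and l: "last p = v" using p unfolding is_path_def by auto
  obtain m where len: "length p = Suc m" using ne by (cases p) auto
  have m0: "m > 0"
  proof (rule ccontr)
    assume "\<not> m > 0"
    then have "length p = 1" using len by simp
    then have "hd p = last p" using ne by (simp add: hd_conv_nth last_conv_nth)
    then show False using h l False by simp
  qed
  have p0: "p!0 = u" using h ne by (simp add: hd_conv_nth)
  have pm: "p!m = v" using l ne len by (simp add: last_conv_nth)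
  define D where "D i = dtot E d (p!i)" for i
  define A where "A i = d (p!i) (p!Suc i) * d (p!Suc i) (p!i)" for i
  define L where "L = ell V E d u v"
  have nodes: "\<And>i. i < Suc m \<Longrightarrow> is_node V E (p!i)" using path_nodes[OF sd p u v] len by simp
  have LA: "L * (\<Prod>i<m. A i) = (\<Prod>i<Suc m. D i)"
    using key[OF sd u v False, of m] len unfolding L_def A_def D_def p_def by simp
  have lt: "D i * D (Suc i) < (A i)^2" if "i < m" for i
    unfolding D_def A_def
    using adj_ineq[OF sd edc nodes nodes] adj len that by simp
  have P1: "(\<Prod>i<Suc m. D i) = (\<Prod>i<m. D i) * D m" by simp
  have P2: "(\<Prod>i<Suc m. D i) = D 0 * (\<Prod>i<m. D (Suc i))" by (simp only: prod.lessThan_Suc_shift)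
  have Apos: "A i > 0" if "i < m" for i using lt[OF that] by (cases "A i = 0") auto
  have Q: "(\<Prod>i<m. D i * D (Suc i)) < (\<Prod>i<m. (A i)^2)"
    using lt m0 Apos by (intro prod_mono_strict[of 0]) (auto intro: less_imp_le)
  have D0m: "D 0 * D m > 0" using dtot_pos[OF sd] u v p0 pm unfolding D_def by simp
  have "(L * L) * ((\<Prod>i<m. A i) * (\<Prod>i<m. A i)) = (\<Prod>i<Suc m. D i) * (\<Prod>i<Suc m. D i)"
    using LA by (metis mult.assoc mult.left_commute)
  also have "\<dots> = (D 0 * D m) * (\<Prod>i<m. D i * D (Suc i))"
    using P1 P2 by (simp add: prod.distrib ac_simps)
  also have "\<dots> < (D 0 * D m) * (\<Prod>i<m. (A i)^2)" using Q D0m by simp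
  also have "\<dots> = (D 0 * D m) * ((\<Prod>i<m. A i) * (\<Prod>i<m. A i))"
    by (simp add: power2_eq_square prod.distrib)
  finally have "L * L < D 0 * D m" by (metis mult_less_cancel2)
  then have "L^2 < dtot E d u * dtot E d v" unfolding D_def p0 pm by (simp add: power2_eq_square)
  then show ?thesis using False unfolding L_def by simp
qed

end
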